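(* FT satisfies clone-proximity: for every finite candidate set $C$, every profile $P$ over $C$ in which $a,a'\in C$ are clones, every axis $\triangleleft\in\mathrm{FT}(P)$, every candidate $x$ with $a\triangleleft x\triangleleft a'$ or $a'\triangleleft x\triangleleft a$, and every ballot $A\in P$ with $a,a'\in A$, we have $x\in A$. For each $f\in\{\mathrm{VD},\mathrm{MF},\mathrm{BC},\mathrm{MS}\}$ clone-proximity fails: there exist $C$, a profile $P$ with clones $a,a'$, an axis $\triangleleft\in f(P)$, a candidate $x$ strictly between $a$ and $a'$ on $\triangleleft$, and a ballot $A\in P$ with $a,a'\in A$ and $x\notin A$.
   Context: Let $C$ be a finite set of candidates. An approval ballot is a nonempty subset $A\subseteq C$; a profile is a finite sequence of ballots. Two candidates $a,a'$ are clones in $P$ if for every ballot $A\in P$, $a\in A$ iff $a'\in A$. An axis is a strict linear order $\triangleleft$ on $C$; $a\trianglelefteq b$ means $a\triangleleft b$ or $a=b$. A ballot $A$ is an interval of $\triangleleft$ if for all $a,b\in A$ and every $c$ with $a\triangleleft c\triangleleft b$ we have $c\in A$. For a cost function $\mathrm{cost}_f$, the scoring rule returns $f(P)=\arg\min_{\triangleleft}\sum_{A\in P}\mathrm{cost}_f(A,\triangleleft)$ over all axes on $C$. The five rules are the scoring rules with costs: $\mathrm{cost}_{\mathrm{VD}}(A,\triangleleft)=0$ if $A$ is an interval of $\triangleleft$ and $1$ otherwise; $\mathrm{cost}_{\mathrm{MF}}(A,\triangleleft)=\min_{x,y\in A,\ x\trianglelefteq y}\big(|\{z\in A: z\triangleleft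 x \text{ or } y\triangleleft z\}|+|\{z\notin A: x\triangleleft z\triangleleft y\}|\big)$; $\mathrm{cost}_{\mathrm{BC}}(A,\triangleleft)=|\{b\notin A: a\triangleleft b\triangleleft c \text{ for some } a,c\in A\}|$; $\mathrm{cost}_{\mathrm{MS}}(A,\triangleleft)=\sum_{x\in C\setminus A}\min\big(|\{y\in A:y\triangleleft x\}|,\,|\{y\in A:x\triangleleft y\}|\big)$; $\mathrm{cost}_{\mathrm{FT}}(A,\triangleleft)=\sum_{x\in C\setminus A}|\{y\in A:y\triangleleft x\}|\cdot|\{y\in A:x\triangleleft y\}|$. *)

theory Defs
  imports Main
begin

text \<open>An axis on a finite candidate set C is a strict linear order on C, represented as a
relation lt with (x,y) in lt meaning x is left of y.\<close>

definition is_axis :: "'a set \<Rightarrow> ('a \<times> 'a) set \<Rightarrow> bool" where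
  "is_axis C lt \<longleftrightarrow> lt \<subseteq> C \<times> C \<and> strict_linear_order_on C lt"

definition axes :: "'a set \<Rightarrow> ('a \<times> 'a) set set" where
  "axes C = {lt. is_axis C lt}"

definition is_profile :: "'a set \<Rightarrow> 'a set list \<Rightarrow> bool" where
  "is_profile C P \<longleftrightarrow> (\<forall>A\<in>set P. A \<noteq> {} \<and> A \<subseteq> C)"

definition clones :: "'a set list \<Rightarrow> 'a \<Rightarrow> 'a \<Rightarrow> bool" where
  "clones P a a' \<longleftrightarrow> (\<forall>A\<in>set P. a \<in> A \<longleftrightarrow> a' \<in> A)"

definition is_interval :: "'a set \<Rightarrow> ('a \<times> 'a) set \<Rightarrow> bool" where
  "is_interval A lt \<longleftrightarrow> (\<forall>a\<in>A. \<forall>b\<in>A. \<forall>c. (a,c) \<in> lt \<and> (c,b) \<in> lt \<longrightarrow> c \<in> A)"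

definition cost_VD :: "'a set \<Rightarrow> 'a set \<Rightarrow> ('a \<times> 'a) set \<Rightarrow> nat" where
  "cost_VD C A lt = (if is_interval A lt then 0 else 1)"

definition cost_MF :: "'a set \<Rightarrow> 'a set \<Rightarrow> ('a \<times> 'a) set \<Rightarrow> nat" where
  "cost_MF C A lt = Min ((\<lambda>(x,y). card {z\<in>A. (z,x) \<in> lt \<or> (y,z) \<in> lt}
                                  + card {z\<in>C - A. (x,z) \<in> lt \<and> (z,y) \<in> lt})
                         ` {(x,y). x \<in> A \<and> y \<in> A \<and> (x = y \<or> (x,y) \<in> lt)})"

definition cost_BC :: "'a set \<Rightarrow> 'a set \<Rightarrow> ('a \<times> 'a) set \<Rightarrow> nat" where
  "cost_BC C A lt = card {b\<in>C - A. \<exists>a\<in>A. \<exists>c\<in>A. (a,b) \<in> lt \<and> (b,c) \<in> lt}"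

definition cost_MS :: "'a set \<Rightarrow> 'a set \<Rightarrow> ('a \<times> 'a) set \<Rightarrow> nat" where
  "cost_MS C A lt = (\<Sum>x\<in>C - A. min (card {y\<in>A. (y,x) \<in> lt}) (card {y\<in>A. (x,y) \<in> lt}))"

definition cost_FT :: "'a set \<Rightarrow> 'a set \<Rightarrow> ('a \<times> 'a) set \<Rightarrow> nat" where
  "cost_FT C A lt = (\<Sum>x\<in>C - A. card {y\<in>A. (y,x) \<in> lt} * card {y\<in>A. (x,y) \<in> lt})"

definition total_cost :: "('a set \<Rightarrow> 'a set \<Rightarrow> ('a \<times> 'a) set \<Rightarrow> nat)
    \<Rightarrow> 'a set \<Rightarrow> 'a set list \<Rightarrow> ('a \<times> 'a) set \<Rightarrow> nat" where
  "total_cost cost C P lt = (\<Sum>A\<leftarrow>P. cost C A lt)"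

definition scoring_rule :: "('a set \<Rightarrow> 'a set \<Rightarrow> ('a \<times> 'a) set \<Rightarrow> nat)
    \<Rightarrow> 'a set \<Rightarrow> 'a set list \<Rightarrow> ('a \<times> 'a) set set" where
  "scoring_rule cost C P =
     {lt \<in> axes C. \<forall>lt' \<in> axes C. total_cost cost C P lt \<le> total_cost cost C P lt'}"

definition clone_proximity :: "('a set \<Rightarrow> 'a set \<Rightarrow> ('a \<times> 'a) set \<Rightarrow> nat) \<Rightarrow> bool" where
  "clone_proximity cost \<longleftrightarrow>
     (\<forall>C P a a' lt x A. finite C \<longrightarrow> is_profile C P \<longrightarrow> a \<in> C \<longrightarrow> a' \<in> C \<longrightarrow>
        clones P a a' \<longrightarrow> lt \<in> scoring_rule cost C P \<longrightarrow>
        ((a,x) \<in> lt \<and> (x,a') \<in> lt \<or> (a',x) \<in> lt \<and> (x,a) \<in> lt) \<longrightarrow>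
        A \<in> set P \<longrightarrow> a \<in> A \<longrightarrow> a' \<in> A \<longrightarrow> x \<in> A)"

end

theory Submission
  imports Defs
begin

definition mvf :: "'a \<Rightarrow> 'a \<Rightarrow> 'a \<Rightarrow> 'a \<Rightarrow> 'a" where
  "mvf c d e u = (if u = c \<or> u = d then e else u)"

definition mv :: "'a set \<Rightarrow> ('a \<times> 'a) set \<Rightarrow> 'a \<Rightarrow> 'a \<Rightarrow> 'a \<Rightarrow> ('a \<times> 'a) set" where
  "mv C lt c d e = {(u,v). u \<in> C \<and> v \<in> C \<and> ((mvf c d e u, mvf c d e v) \<in> lt \<or> (u = c \<and> v = d))}"

lemma axis_facts:
  assumes "is_axis C lt"
  shows "lt \<subseteq> C \<times> C" "\<And>x y z. (x,y) \<in> lt \<Longrightarrow> (y,z) \<in> lt \<Longrightarrow> (x,z) \<in> lt"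
    "\<And>x. (x,x) \<notin> lt" "\<And>x y. x \<in> C \<Longrightarrow> y \<in> C \<Longrightarrow> x \<noteq> y \<Longrightarrow> (x,y) \<in> lt \<or> (y,x) \<in> lt"
  using assms unfolding is_axis_def strict_linear_order_on_def trans_def irrefl_on_def total_on_def
  by blast+

lemma mv_axis:
  assumes ax: "is_axis C lt" and "c \<in> C" "d \<in> C" "c \<noteq> d" "e = c \<or> e = d"
  shows "is_axis C (mv C lt c d e)"
proof -
  note F = axis_facts[OF ax]
  have fC: "\<And>u. u \<in> C \<Longrightarrow> mvf c d e u \<in> C" using assms by (auto simp: mvf_def)
  have sub: "mv C lt c d e \<subseteq> C \<times> C" by (auto simp: mv_def)
  have tr: "trans (mv C lt c d e)"
    unfolding trans_def mv_def
    using F(2,3) assms(4,5) by (auto simp: mvf_def split: if_splits)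
  have ir: "irrefl (mv C lt c d e)"
    unfolding irrefl_on_def mv_def using F(3) assms(4) by auto
  have tot: "total_on C (mv C lt c d e)"
    unfolding total_on_def mv_def
    using F(4) fC assms(2-5) by (auto simp: mvf_def split: if_splits)
  show ?thesis using sub tr ir tot unfolding is_axis_def strict_linear_order_on_def by blast
qed

lemma mv_mem:
  assumes "c \<in> C" "d \<in> C"
  shows "\<And>u v. u \<in> C \<Longrightarrow> v \<in> C \<Longrightarrow> u \<notin> {c,d} \<Longrightarrow> v \<notin> {c,d} \<Longrightarrow> (u,v) \<in> mv C lt c d e \<longleftrightarrow> (u,v) \<in> lt"
    "\<And>v. v \<in> C \<Longrightarrow> v \<notin> {c,d} \<Longrightarrow> (c,v) \<in> mv C lt c d e \<longleftrightarrow> (e,v) \<in> lt"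
    "\<And>v. v \<in> C \<Longrightarrow> v \<notin> {c,d} \<Longrightarrow> (d,v) \<in> mv C lt c d e \<longleftrightarrow> (e,v) \<in> lt"
    "\<And>v. v \<in> C \<Longrightarrow> v \<notin> {c,d} \<Longrightarrow> (v,c) \<in> mv C lt c d e \<longleftrightarrow> (v,e) \<in> lt"
    "\<And>v. v \<in> C \<Longrightarrow> v \<notin> {c,d} \<Longrightarrow> (v,d) \<in> mv C lt c d e \<longleftrightarrow> (v,e) \<in> lt"
  using assms by (auto simp: mv_def mvf_def)

lemma card_split2:
  assumes "finite B" "c \<in> B" "d \<in> B" "c \<noteq> d"
  shows "card {w\<in>B. P w} = card {w\<in>B-{c,d}. P w} + (if P c then 1 else 0) + (if P d then 1 else 0)"
proof -
  have "{w\<in>B. P w} = {w\<in>B-{c,d}. P w} \<union> {w\<in>{c,d}. P w}" using assms by auto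
  moreover have "card ({w\<in>B-{c,d}. P w} \<union> {w\<in>{c,d}. P w}) = card {w\<in>B-{c,d}. P w} + card {w\<in>{c,d}. P w}"
    by (rule card_Un_disjoint) (use assms in auto)
  moreover have "card {w\<in>{c,d}. P w} = (if P c then 1 else 0) + (if P d then 1 else 0)"
  proof -
    have "{w\<in>{c,d}. P w} = (if P c then {c} else {}) \<union> (if P d then {d} else {})" by auto
    thus ?thesis using assms(4) by simp
  qed
  ultimately show ?thesis by simp
qed

definition tm :: "('a \<times> 'a) set \<Rightarrow> 'a set \<Rightarrow> 'a \<Rightarrow> nat" where
  "tm R B y = card {w\<in>B. (w,y) \<in> R} * card {w\<in>B. (y,w) \<in> R}"

lemma cost_FT_tm: "cost_FT C B R = (\<Sum>y\<in>C - B. tm R B y)"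
  by (simp add: cost_FT_def tm_def)

lemma arith_key:
  fixes l r :: nat and p q :: bool
  shows "(l + (if p then 1 else 0) + (if p then 1 else 0)) * (r + (if p then 0 else 1) + (if p then 0 else 1))
       + (l + (if q then 1 else 0) + (if q then 1 else 0)) * (r + (if q then 0 else 1) + (if q then 0 else 1))
       \<le> 2 * ((l + (if p then 1 else 0) + (if q then 1 else 0)) * (r + (if p then 0 else 1) + (if q then 0 else 1)))"
    "p \<noteq> q \<Longrightarrow> (l + (if p then 1 else 0) + (if p then 1 else 0)) * (r + (if p then 0 else 1) + (if p then 0 else 1))
       + (l + (if q then 1 else 0) + (if q then 1 else 0)) * (r + (if q then 0 else 1) + (if q then 0 else 1))
       < 2 * ((l + (if p then 1 else 0) + (if q then 1 else 0)) * (r + (if p then 0 else 1) + (if q then 0 else 1)))"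
  by (cases p; cases q; simp add: algebra_simps)+

lemma tm_both:
  assumes ax: "is_axis C lt" and fin: "finite C" and B: "B \<subseteq> C" and cd: "c \<in> B" "d \<in> B" "c \<noteq> d"
    and y: "y \<in> C" "y \<notin> B"
  shows "tm (mv C lt c d c) B y + tm (mv C lt c d d) B y \<le> 2 * tm lt B y"
    "(c,y) \<in> lt \<Longrightarrow> (y,d) \<in> lt \<Longrightarrow> tm (mv C lt c d c) B y + tm (mv C lt c d d) B y < 2 * tm lt B y"
proof -
  note F = axis_facts[OF ax]
  have fB: "finite B" using fin B finite_subset by blast
  have cC: "c \<in> C" "d \<in> C" using B cd by auto
  have yn: "y \<noteq> c" "y \<noteq> d" using y cd by auto
  define l where "l = card {w\<in>B-{c,d}. (w,y) \<in> lt}"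
  define r where "r = card {w\<in>B-{c,d}. (y,w) \<in> lt}"
  define p where "p = ((c,y) \<in> lt)"
  define q where "q = ((d,y) \<in> lt)"
  have pc: "(y,c) \<in> lt \<longleftrightarrow> \<not> p" unfolding p_def using F(2,3) F(4)[of y c] cC y yn by blast
  have qc: "(y,d) \<in> lt \<longleftrightarrow> \<not> q" unfolding q_def using F(2,3) F(4)[of y d] cC y yn by blast
  have E: "tm lt B y = (l + (if p then 1 else 0) + (if q then 1 else 0)) * (r + (if p then 0 else 1) + (if q then 0 else 1))"
    unfolding tm_def l_def r_def card_split2[OF fB cd, of "\<lambda>w. (w,y) \<in> lt"] card_split2[OF fB cd, of "\<lambda>w. (y,w) \<in> lt"]
    using pc qc p_def q_def by simp
  have E1: "tm (mv C lt c d e) B y = (l + (if (e,y)\<in>lt then 1 else 0) + (if (e,y)\<in>lt then 1 else 0)) * (r + (if (y,e)\<in>lt then 1 else 0) + (if (y,e)\<in>lt then 1 else 0))" for e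
  proof -
    have s1: "{w\<in>B-{c,d}. (w,y) \<in> mv C lt c d e} = {w\<in>B-{c,d}. (w,y) \<in> lt}"
      using mv_mem(1)[OF cC] B y yn by auto
    have s2: "{w\<in>B-{c,d}. (y,w) \<in> mv C lt c d e} = {w\<in>B-{c,d}. (y,w) \<in> lt}"
      using mv_mem(1)[OF cC] B y yn by auto
    show ?thesis
      unfolding tm_def card_split2[OF fB cd, of "\<lambda>w. (w,y) \<in> mv C lt c d e"] card_split2[OF fB cd, of "\<lambda>w. (y,w) \<in> mv C lt c d e"] s1 s2
      using mv_mem(2-5)[OF cC] y yn l_def r_def by simp
  qed
  have E1c: "tm (mv C lt c d c) B y = (l + (if p then 1 else 0) + (if p then 1 else 0)) * (r + (if p then 0 else 1) + (if p then 0 else 1))"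
    using E1[of c] pc p_def by simp
  have E1d: "tm (mv C lt c d d) B y = (l + (if q then 1 else 0) + (if q then 1 else 0)) * (r + (if q then 0 else 1) + (if q then 0 else 1))"
    using E1[of d] qc q_def by simp
  show "tm (mv C lt c d c) B y + tm (mv C lt c d d) B y \<le> 2 * tm lt B y"
    unfolding E E1c E1d by (rule arith_key(1))
  assume "(c,y) \<in> lt" "(y,d) \<in> lt"
  hence "p \<noteq> q" using p_def qc by blast
  thus "tm (mv C lt c d c) B y + tm (mv C lt c d d) B y < 2 * tm lt B y"
    unfolding E E1c E1d by (rule arith_key(2))
qed

lemma cost_ballot:
  assumes ax: "is_axis C lt" and fin: "finite C" and B: "B \<subseteq> C" and cC: "c \<in> C" "d \<in> C" "c \<noteq> d"
    and cl: "c \<in> B \<longleftrightarrow> d \<in> B"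
  shows "cost_FT C B (mv C lt c d c) + cost_FT C B (mv C lt c d d) \<le> 2 * cost_FT C B lt"
proof (cases "c \<in> B")
  case True
  hence dB: "d \<in> B" using cl by simp
  have "cost_FT C B (mv C lt c d c) + cost_FT C B (mv C lt c d d) = (\<Sum>y\<in>C-B. tm (mv C lt c d c) B y + tm (mv C lt c d d) B y)"
    unfolding cost_FT_tm sum.distrib ..
  also have "\<dots> \<le> (\<Sum>y\<in>C-B. 2 * tm lt B y)"
    by (rule sum_mono) (use tm_both(1)[OF ax fin B True dB cC(3)] in auto)
  also have "\<dots> = 2 * cost_FT C B lt" unfolding cost_FT_tm sum_distrib_left ..
  finally show ?thesis .
next
  case False
  hence dB: "d \<notin> B" using cl by simp
  have fin2: "finite (C - B - {c,d})" using fin by auto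
  have CB: "C - B = insert c (insert d (C - B - {c,d}))" using False dB cC by auto
  have sp: "(\<Sum>y\<in>C-B. f y) = f c + f d + (\<Sum>y\<in>C-B-{c,d}. f y)" for f :: "'a \<Rightarrow> nat"
    by (subst CB) (use fin2 cC(3) in auto)
  have same: "tm (mv C lt c d e) B y = tm lt B y" if "y \<in> C-B-{c,d}" for y e
  proof -
    have "{w\<in>B. (w,y) \<in> mv C lt c d e} = {w\<in>B. (w,y) \<in> lt}" "{w\<in>B. (y,w) \<in> mv C lt c d e} = {w\<in>B. (y,w) \<in> lt}"
      using mv_mem(1)[OF cC(1,2), where lt=lt and e=e] that B False dB by blast+
    thus ?thesis unfolding tm_def by simp
  qed
  have ends: "tm (mv C lt c d e) B c = tm lt B e" "tm (mv C lt c d e) B d = tm lt B e" for e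
  proof -
    have "{w\<in>B. (w,c) \<in> mv C lt c d e} = {w\<in>B. (w,e) \<in> lt}" "{w\<in>B. (c,w) \<in> mv C lt c d e} = {w\<in>B. (e,w) \<in> lt}"
      "{w\<in>B. (w,d) \<in> mv C lt c d e} = {w\<in>B. (w,e) \<in> lt}" "{w\<in>B. (d,w) \<in> mv C lt c d e} = {w\<in>B. (e,w) \<in> lt}"
      using mv_mem(2-5)[OF cC(1,2), where lt=lt and e=e] B False dB by blast+
    thus "tm (mv C lt c d e) B c = tm lt B e" "tm (mv C lt c d e) B d = tm lt B e" unfolding tm_def by simp_all
  qed
  show ?thesis unfolding cost_FT_tm sp using same ends by simp
qed

lemma cost_ballot_strict:
  assumes ax: "is_axis C lt" and fin: "finite C" and B: "B \<subseteq> C" and cd: "c \<in> B" "d \<in> B" "c \<noteq> d"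
    and x: "(c,x) \<in> lt" "(x,d) \<in> lt" "x \<notin> B"
  shows "cost_FT C B (mv C lt c d c) + cost_FT C B (mv C lt c d d) < 2 * cost_FT C B lt"
proof -
  have xC: "x \<in> C" using x axis_facts(1)[OF ax] by auto
  have "cost_FT C B (mv C lt c d c) + cost_FT C B (mv C lt c d d) = (\<Sum>y\<in>C-B. tm (mv C lt c d c) B y + tm (mv C lt c d d) B y)"
    unfolding cost_FT_tm sum.distrib ..
  also have "\<dots> < (\<Sum>y\<in>C-B. 2 * tm lt B y)"
  proof (rule sum_strict_mono_ex1)
    show "finite (C - B)" using fin by auto
    show "\<forall>y\<in>C-B. tm (mv C lt c d c) B y + tm (mv C lt c d d) B y \<le> 2 * tm lt B y"
      using tm_both(1)[OF ax fin B cd] by auto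
    show "\<exists>y\<in>C-B. tm (mv C lt c d c) B y + tm (mv C lt c d d) B y < 2 * tm lt B y"
      using tm_both(2)[OF ax fin B cd xC x(3) x(1,2)] xC x(3) by blast
  qed
  also have "\<dots> = 2 * cost_FT C B lt" unfolding cost_FT_tm sum_distrib_left ..
  finally show ?thesis .
qed

lemma sum_list_strict:
  fixes g h :: "'b \<Rightarrow> nat"
  assumes "\<forall>B\<in>set P. g B \<le> h B" "A \<in> set P" "g A < h A"
  shows "(\<Sum>B\<leftarrow>P. g B) < (\<Sum>B\<leftarrow>P. h B)"
  using assms
proof (induction P)
  case Nil thus ?case by simp
next
  case (Cons B P)
  show ?case
  proof (cases "A = B")
    case True
    have "(\<Sum>B\<leftarrow>P. g B) \<le> (\<Sum>B\<leftarrow>P. h B)" using Cons.prems(1) by (intro sum_list_mono) auto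
    thus ?thesis using True Cons.prems by simp
  next
    case False
    hence "(\<Sum>B\<leftarrow>P. g B) < (\<Sum>B\<leftarrow>P. h B)" using Cons by auto
    thus ?thesis using Cons.prems(1) by (simp add: add_mono_thms_linordered_field(4))
  qed
qed

lemma FT_core:
  assumes fin: "finite C" and prof: "is_profile C P" and cC: "c \<in> C" "d \<in> C" and cl: "clones P c d"
    and opt: "lt \<in> scoring_rule cost_FT C P" and x: "(c,x) \<in> lt" "(x,d) \<in> lt"
    and A: "A \<in> set P" "c \<in> A" "d \<in> A"
  shows "x \<in> A"
proof (rule ccontr)
  assume xA: "x \<notin> A"
  have ax: "is_axis C lt" using opt by (simp add: scoring_rule_def axes_def)
  note F = axis_facts[OF ax]
  have cd: "c \<noteq> d" using F(2)[OF x] F(3) by blast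
  have ax1: "mv C lt c d c \<in> axes C" and ax2: "mv C lt c d d \<in> axes C"
    using mv_axis[OF ax cC cd] by (auto simp: axes_def)
  have le1: "total_cost cost_FT C P lt \<le> total_cost cost_FT C P (mv C lt c d c)"
    and le2: "total_cost cost_FT C P lt \<le> total_cost cost_FT C P (mv C lt c d d)"
    using opt ax1 ax2 by (auto simp: scoring_rule_def)
  have BC: "\<And>B. B \<in> set P \<Longrightarrow> B \<subseteq> C" using prof by (auto simp: is_profile_def)
  have "(\<Sum>B\<leftarrow>P. cost_FT C B (mv C lt c d c) + cost_FT C B (mv C lt c d d)) < (\<Sum>B\<leftarrow>P. 2 * cost_FT C B lt)"
  proof (rule sum_list_strict[OF _ A(1)])
    show "\<forall>B\<in>set P. cost_FT C B (mv C lt c d c) + cost_FT C B (mv C lt c d d) \<le> 2 * cost_FT C B lt"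
      using cost_ballot[OF ax fin BC cC cd] cl unfolding clones_def by blast
    show "cost_FT C A (mv C lt c d c) + cost_FT C A (mv C lt c d d) < 2 * cost_FT C A lt"
      by (rule cost_ballot_strict[OF ax fin BC[OF A(1)] A(2,3) cd x xA])
  qed
  hence "total_cost cost_FT C P (mv C lt c d c) + total_cost cost_FT C P (mv C lt c d d) < 2 * total_cost cost_FT C P lt"
    unfolding total_cost_def sum_list_addf sum_list_const_mult .
  thus False using le1 le2 by linarith
qed

lemma FT_clone_proximity: "clone_proximity cost_FT"
  unfolding clone_proximity_def
proof (intro allI impI)
  fix C P a a' lt x A
  assume h: "finite C" "is_profile C P" "a \<in> C" "a' \<in> C" "clones P a a'" "lt \<in> scoring_rule cost_FT C P"
    "(a, x) \<in> lt \<and> (x, a') \<in> lt \<or> (a', x) \<in> lt \<and> (x, a) \<in> lt" "A \<in> set P" "a \<in> A" "a' \<in> A"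
  have cl': "clones P a' a" using h(5) by (auto simp: clones_def)
  show "x \<in> A" using h(7)
  proof
    assume "(a, x) \<in> lt \<and> (x, a') \<in> lt"
    thus ?thesis using FT_core[OF h(1-5) h(6)] h(8-10) by blast
  next
    assume "(a', x) \<in> lt \<and> (x, a) \<in> lt"
    thus ?thesis using FT_core[OF h(1,2) h(4,3) cl' h(6)] h(8-10) by blast
  qed
qed

definition rk_axis :: "'a set \<Rightarrow> ('a \<Rightarrow> nat) \<Rightarrow> ('a \<times> 'a) set" where
  "rk_axis C r = {(u,v). u \<in> C \<and> v \<in> C \<and> r u < r v}"

lemma rk_axis_is: "inj_on r C \<Longrightarrow> is_axis C (rk_axis C r)"
  unfolding is_axis_def strict_linear_order_on_def trans_def irrefl_on_def total_on_def rk_axis_def inj_on_def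
  by (auto; metis nat_neq_iff)

lemma card_filter_insert:
  "a \<notin> A \<Longrightarrow> finite A \<Longrightarrow> card {y\<in>insert a A. P y} = (if P a then 1 else 0) + card {y\<in>A. P y}"
proof -
  assume h: "a \<notin> A" "finite A"
  show ?thesis
  proof (cases "P a")
    case True
    hence "{y\<in>insert a A. P y} = insert a {y\<in>A. P y}" by auto
    thus ?thesis using h True by simp
  next
    case False
    hence "{y\<in>insert a A. P y} = {y\<in>A. P y}" by auto
    thus ?thesis using False by simp
  qed
qed

lemma card_filter_empty: "card {y\<in>{}. P y} = 0" by simp

abbreviation C5 :: "nat set" where "C5 \<equiv> {0,1,2,3,4}"

definition lt1 :: "(nat \<times> nat) set" where "lt1 = rk_axis C5 (\<lambda>u. [0,2,4,1,3] ! u)"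
definition lt2 :: "(nat \<times> nat) set" where "lt2 = rk_axis C5 id"

lemma lt1_ax: "lt1 \<in> axes C5"
  unfolding lt1_def axes_def by (auto intro!: rk_axis_is simp: inj_on_def)
lemma lt2_ax: "lt2 \<in> axes C5"
  unfolding lt2_def axes_def by (auto intro!: rk_axis_is simp: inj_on_def)

lemma lt1_mem: "(u,v) \<in> lt1 \<longleftrightarrow> u \<in> C5 \<and> v \<in> C5 \<and> [0::nat,2,4,1,3] ! u < [0,2,4,1,3] ! v"
  by (simp add: lt1_def rk_axis_def)

lemma VD1: "total_cost cost_VD C5 [{1,3},{1,4},{0,2,3,4}] lt1 \<le> 1"
  unfolding total_cost_def cost_VD_def is_interval_def lt1_mem by auto

lemma BC1: "total_cost cost_BC C5 [{1,3},{1,4},{0,2,3,4}] lt1 \<le> 1"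
proof -
  have e1: "{b\<in>C5 - {1,3}. \<exists>a\<in>{1,3}. \<exists>c\<in>{1,3}. (a,b) \<in> lt1 \<and> (b,c) \<in> lt1} = {}"
    unfolding lt1_mem by auto
  have e2: "{b\<in>C5 - {1,4}. \<exists>a\<in>{1,4}. \<exists>c\<in>{1,4}. (a,b) \<in> lt1 \<and> (b,c) \<in> lt1} = {}"
    unfolding lt1_mem by auto
  have "{b\<in>C5 - {0,2,3,4}. \<exists>a\<in>{0,2,3,4}. \<exists>c\<in>{0,2,3,4}. (a,b) \<in> lt1 \<and> (b,c) \<in> lt1} \<subseteq> {1}"
    by auto
  hence e3: "card {b\<in>C5 - {0,2,3,4}. \<exists>a\<in>{0,2,3,4}. \<exists>c\<in>{0,2,3,4}. (a,b) \<in> lt1 \<and> (b,c) \<in> lt1} \<le> 1"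
    using card_mono[of "{1::nat}"] by fastforce
  have "cost_BC C5 {1,3} lt1 = 0" "cost_BC C5 {1,4} lt1 = 0" "cost_BC C5 {0,2,3,4} lt1 \<le> 1"
    unfolding cost_BC_def e1 e2 using e3 by simp_all
  thus ?thesis unfolding total_cost_def by simp
qed

lemma MF_le:
  assumes "x \<in> A" "y \<in> A" "x = y \<or> (x,y) \<in> lt" "finite A"
  shows "cost_MF C A lt \<le> card {z\<in>A. (z,x) \<in> lt \<or> (y,z) \<in> lt} + card {z\<in>C - A. (x,z) \<in> lt \<and> (z,y) \<in> lt}"
  unfolding cost_MF_def
proof (rule Min_le)
  show "finite ((\<lambda>(x,y). card {z\<in>A. (z,x) \<in> lt \<or> (y,z) \<in> lt} + card {z\<in>C - A. (x,z) \<in> lt \<and> (z,y) \<in> lt})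
      ` {(x,y). x \<in> A \<and> y \<in> A \<and> (x = y \<or> (x,y) \<in> lt)})"
    by (rule finite_imageI, rule finite_subset[of _ "A \<times> A"]) (use assms in auto)
  show "card {z\<in>A. (z,x) \<in> lt \<or> (y,z) \<in> lt} + card {z\<in>C - A. (x,z) \<in> lt \<and> (z,y) \<in> lt} \<in> (\<lambda>(x,y). card {z\<in>A. (z,x) \<in> lt \<or> (y,z) \<in> lt} + card {z\<in>C - A. (x,z) \<in> lt \<and> (z,y) \<in> lt})
      ` {(x,y). x \<in> A \<and> y \<in> A \<and> (x = y \<or> (x,y) \<in> lt)}"
    using assms by force
qed

lemma MF1: "total_cost cost_MF C5 [{1,3},{1,4},{0,2,3,4}] lt1 \<le> 1"
proof -
  have a: "cost_MF C5 {1,3} lt1 \<le> card {z\<in>{1,3}. (z,3) \<in> lt1 \<or> (1,z) \<in> lt1} + card {z\<in>C5 - {1,3}. (3,z) \<in> lt1 \<and> (z,1) \<in> lt1}"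
    by (rule MF_le) (auto simp: lt1_mem)
  have a1: "{z\<in>{1,3}. (z,3) \<in> lt1 \<or> (1,z) \<in> lt1} = {}" "{z\<in>C5 - {1,3}. (3,z) \<in> lt1 \<and> (z,1) \<in> lt1} = {}"
    unfolding lt1_mem by auto
  have b: "cost_MF C5 {1,4} lt1 \<le> card {z\<in>{1,4}. (z,1) \<in> lt1 \<or> (4,z) \<in> lt1} + card {z\<in>C5 - {1,4}. (1,z) \<in> lt1 \<and> (z,4) \<in> lt1}"
    by (rule MF_le) (auto simp: lt1_mem)
  have b1: "{z\<in>{1,4}. (z,1) \<in> lt1 \<or> (4,z) \<in> lt1} = {}" "{z\<in>C5 - {1,4}. (1,z) \<in> lt1 \<and> (z,4) \<in> lt1} = {}"
    unfolding lt1_mem by auto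
  have c: "cost_MF C5 {0,2,3,4} lt1 \<le> card {z\<in>{0,2,3,4}. (z,0) \<in> lt1 \<or> (2,z) \<in> lt1} + card {z\<in>C5 - {0,2,3,4}. (0,z) \<in> lt1 \<and> (z,2) \<in> lt1}"
    by (rule MF_le) (auto simp: lt1_mem)
  have c1: "{z\<in>{0,2,3,4}. (z,0) \<in> lt1 \<or> (2,z) \<in> lt1} = {}" "{z\<in>C5 - {0,2,3,4}. (0,z) \<in> lt1 \<and> (z,2) \<in> lt1} \<subseteq> {1}"
    unfolding lt1_mem by auto
  have c2: "card {z\<in>C5 - {0,2,3,4}. (0,z) \<in> lt1 \<and> (z,2) \<in> lt1} \<le> 1"
    using card_mono[OF _ c1(2)] by simp
  have "cost_MF C5 {1,3} lt1 = 0" "cost_MF C5 {1,4} lt1 = 0" "cost_MF C5 {0,2,3,4} lt1 \<le> 1"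
    using a b c c2 unfolding a1 b1 c1(1) by simp_all
  thus ?thesis unfolding total_cost_def by simp
qed


lemma axis_facts2:
  assumes "is_axis C lt"
  shows "lt \<subseteq> C \<times> C" "\<And>x y z. (x,y) \<in> lt \<Longrightarrow> (y,z) \<in> lt \<Longrightarrow> (x,z) \<in> lt"
    "\<And>x. (x,x) \<notin> lt" "\<And>x y. x \<in> C \<Longrightarrow> y \<in> C \<Longrightarrow> x \<noteq> y \<Longrightarrow> (x,y) \<in> lt \<or> (y,x) \<in> lt"
  using assms unfolding is_axis_def strict_linear_order_on_def trans_def irrefl_on_def total_on_def
  by blast+

lemma VD_zero: "cost_VD C B lt = 0 \<Longrightarrow> is_interval B lt"
  by (simp add: cost_VD_def split: if_splits)

lemma BC_zero:
  assumes "is_axis C lt" "finite C" "cost_BC C B lt = 0"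
  shows "is_interval B lt"
proof -
  have "{b\<in>C - B. \<exists>a\<in>B. \<exists>c\<in>B. (a,b) \<in> lt \<and> (b,c) \<in> lt} = {}"
    using assms(2,3) unfolding cost_BC_def by simp
  thus ?thesis using axis_facts2(1)[OF assms(1)] unfolding is_interval_def by blast
qed

lemma MF_zero:
  assumes ax: "is_axis C lt" "finite C" "B \<subseteq> C" "B \<noteq> {}" "cost_MF C B lt = 0"
  shows "is_interval B lt"
proof -
  note F = axis_facts2[OF ax(1)]
  have fB: "finite B" using assms finite_subset by blast
  let ?f = "(\<lambda>(x,y). card {z\<in>B. (z,x) \<in> lt \<or> (y,z) \<in> lt} + card {z\<in>C - B. (x,z) \<in> lt \<and> (z,y) \<in> lt})"
  let ?S = "{(x,y). x \<in> B \<and> y \<in> B \<and> (x = y \<or> (x,y) \<in> lt)}"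
  have fin: "finite (?f ` ?S)"
    by (rule finite_imageI, rule finite_subset[of _ "B \<times> B"]) (use fB in auto)
  have ne: "?f ` ?S \<noteq> {}" using assms(4) by auto
  have "0 \<in> ?f ` ?S" using Min_in[OF fin ne] assms(5) unfolding cost_MF_def by simp
  then obtain x y where xy: "x \<in> B" "y \<in> B" "x = y \<or> (x,y) \<in> lt"
    and z: "card {z\<in>B. (z,x) \<in> lt \<or> (y,z) \<in> lt} = 0" "card {z\<in>C - B. (x,z) \<in> lt \<and> (z,y) \<in> lt} = 0"
    by auto
  have z1: "{z\<in>B. (z,x) \<in> lt \<or> (y,z) \<in> lt} = {}" using z(1) fB by simp
  have z2: "{z\<in>C - B. (x,z) \<in> lt \<and> (z,y) \<in> lt} = {}" using z(2) ax(2) by simp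
  show ?thesis unfolding is_interval_def
  proof (intro ballI allI impI)
    fix a b c assume ab: "a \<in> B" "b \<in> B" "(a,c) \<in> lt \<and> (c,b) \<in> lt"
    have "a = x \<or> (x,a) \<in> lt" using F(4)[of a x] z1 ab(1) xy(1) ax(3) by blast
    hence xc: "(x,c) \<in> lt" using ab(3) F(2) by blast
    have "b = y \<or> (b,y) \<in> lt" using F(4)[of b y] z1 ab(2) xy(2) ax(3) by blast
    hence cy: "(c,y) \<in> lt" using ab(3) F(2) by blast
    have "c \<in> C" using ab(3) F(1) by blast
    thus "c \<in> B" using z2 xc cy by blast
  qed
qed

lemma no_all_int:
  assumes ax: "is_axis C lt" and C: "(1::nat) \<in> C" "3 \<in> C" "4 \<in> C"
  shows "\<not> (is_interval {1,3} lt \<and> is_interval {1,4} lt \<and> is_interval {0,2,3,4} lt)"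
proof
  note F = axis_facts2[OF ax]
  assume h: "is_interval {1,3} lt \<and> is_interval {1,4} lt \<and> is_interval {0,2,3,4} lt"
  have t1: "(1,3) \<in> lt \<or> (3,1) \<in> lt" using F(4)[of 1 3] C by simp
  have t2: "(1,4) \<in> lt \<or> (4,1) \<in> lt" using F(4)[of 1 4] C by simp
  have t3: "(3,4) \<in> lt \<or> (4,3) \<in> lt" using F(4)[of 3 4] C by simp
  have i1: "\<And>c. (1,c) \<in> lt \<Longrightarrow> (c,3) \<in> lt \<Longrightarrow> c \<in> {1,3}" "\<And>c. (3,c) \<in> lt \<Longrightarrow> (c,1) \<in> lt \<Longrightarrow> c \<in> {1,3}"
    using h unfolding is_interval_def by blast+
  have i2: "\<And>c. (1,c) \<in> lt \<Longrightarrow> (c,4) \<in> lt \<Longrightarrow> c \<in> {1,4}" "\<And>c. (4,c) \<in> lt \<Longrightarrow> (c,1) \<in> lt \<Longrightarrow> c \<in> {1,4}"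
    using h unfolding is_interval_def by blast+
  have i3: "\<And>c. (3,c) \<in> lt \<Longrightarrow> (c,4) \<in> lt \<Longrightarrow> c \<in> {0,2,3,4}" "\<And>c. (4,c) \<in> lt \<Longrightarrow> (c,3) \<in> lt \<Longrightarrow> c \<in> {0,2,3,4}"
    using h unfolding is_interval_def by blast+
  show False
  proof (cases "(1,3) \<in> lt")
    case a: True
    show False
    proof (cases "(3,4) \<in> lt")
      case True thus False using i2(1)[of 3] a F(2) by auto
    next
      case b: False
      hence b: "(4,3) \<in> lt" using t3 by simp
      show False
      proof (cases "(1,4) \<in> lt")
        case True thus False using i1(1)[of 4] b by auto
      next
        case False thus False using t2 i3(2)[of 1] a b by auto
      qed
    qed
  next
    case False
    hence a: "(3,1) \<in> lt" using t1 by simp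
    show False
    proof (cases "(1,4) \<in> lt")
      case True thus False using i3(1)[of 1] a by auto
    next
      case False
      hence b: "(4,1) \<in> lt" using t2 by simp
      show False
      proof (cases "(3,4) \<in> lt")
        case True thus False using i1(2)[of 4] b by auto
      next
        case False thus False using t3 i2(2)[of 3] a by auto
      qed
    qed
  qed
qed

lemma card3: "a\<noteq>b \<Longrightarrow> a\<noteq>c \<Longrightarrow> b\<noteq>c \<Longrightarrow> card {y\<in>{a,b,c}. P y} = of_bool (P a) + of_bool (P b) + of_bool (P c)"
  by (subst card_filter_insert, simp, simp)+ simp
lemma card4: "a\<noteq>b \<Longrightarrow> a\<noteq>c \<Longrightarrow> a\<noteq>d \<Longrightarrow> b\<noteq>c \<Longrightarrow> b\<noteq>d \<Longrightarrow> c\<noteq>d \<Longrightarrow> card {y\<in>{a,b,c,d}. P y} = of_bool (P a) + of_bool (P b) + of_bool (P c) + of_bool (P d)"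
  by (subst card_filter_insert, simp, simp)+ simp
lemma c012: "card {y\<in>{0::nat,1,2}. P y} = of_bool (P 0) + of_bool (P 1) + of_bool (P 2)" by (rule card3) simp_all
lemma c134: "card {y\<in>{1::nat,3,4}. P y} = of_bool (P 1) + of_bool (P 3) + of_bool (P 4)" by (rule card3) simp_all
lemma c0234: "card {y\<in>{0::nat,2,3,4}. P y} = of_bool (P 0) + of_bool (P 2) + of_bool (P 3) + of_bool (P 4)" by (rule card4) simp_all
lemma s34: "sum f {3::nat,4} = f 3 + f 4" by simp
lemma s02: "sum f {0::nat,2} = f 0 + f 2" by simp
lemma s1: "sum f {1::nat} = f 1" by simp

lemma MS_expand: "total_cost cost_MS C5 [{0,1,2},{1,3,4},{0,2,3,4}] lt =
  min (of_bool ((0,3) \<in> lt) + of_bool ((1,3) \<in> lt) + of_bool ((2,3) \<in> lt)) (of_bool ((3,0) \<in> lt) + of_bool ((3,1) \<in> lt) + of_bool ((3,2) \<in> lt))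
 + min (of_bool ((0,4) \<in> lt) + of_bool ((1,4) \<in> lt) + of_bool ((2,4) \<in> lt)) (of_bool ((4,0) \<in> lt) + of_bool ((4,1) \<in> lt) + of_bool ((4,2) \<in> lt))
 + (min (of_bool ((1,0) \<in> lt) + of_bool ((3,0) \<in> lt) + of_bool ((4,0) \<in> lt)) (of_bool ((0,1) \<in> lt) + of_bool ((0,3) \<in> lt) + of_bool ((0,4) \<in> lt))
 + min (of_bool ((1,2) \<in> lt) + of_bool ((3,2) \<in> lt) + of_bool ((4,2) \<in> lt)) (of_bool ((2,1) \<in> lt) + of_bool ((2,3) \<in> lt) + of_bool ((2,4) \<in> lt)))
 + min (of_bool ((0,1) \<in> lt) + of_bool ((2,1) \<in> lt) + of_bool ((3,1) \<in> lt) + of_bool ((4,1) \<in> lt)) (of_bool ((1,0) \<in> lt) + of_bool ((1,2) \<in> lt) + of_bool ((1,3) \<in> lt) + of_bool ((1,4) \<in> lt))"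
proof -
  have d1: "C5 - {0,1,2} = {3,4}" and d2: "C5 - {1,3,4} = {0,2}" and d3: "C5 - {0,2,3,4} = {1}" by auto
  show ?thesis
    by (simp only: total_cost_def cost_MS_def d1 d2 d3 list.map sum_list.Cons sum_list.Nil s34 s02 s1 c012 c134 c0234 add_0_right add.assoc)
qed

lemma MS_abs_closed:
  "((qab \<longrightarrow> qbc \<longrightarrow> qac) \<and> (qab \<longrightarrow> qbd \<longrightarrow> qad) \<and> (qab \<longrightarrow> qbe \<longrightarrow> qae) \<and> (qac \<longrightarrow> (\<not> qbc) \<longrightarrow> qab) \<and> (qac \<longrightarrow> qcd \<longrightarrow> qad) \<and> (qac \<longrightarrow> qce \<longrightarrow> qae) \<and> (qad \<longrightarrow> (\<not> qbd) \<longrightarrow> qab) \<and> (qad \<longrightarrow> (\<not> qcd) \<longrightarrow> qac) \<and> (qad \<longrightarrow> qde \<longrightarrow> qae) \<and> (qae \<longrightarrow> (\<not> qbe) \<longrightarrow> qab) \<and> (qae \<longrightarrow> (\<not> qce) \<longrightarrow> qac) \<and> (qae \<longrightarrow> (\<not> qde) \<longrightarrow> qad) \<and> ((\<not> qab) \<longrightarrow> qac \<longrightarrow> qbc) \<and> ((\<not> qab) \<longrightarrow> qad \<longrightarrow> qbd) \<and> ((\<not> qab) \<longrightarrow> qae \<longrightarrow> qbe) \<and> (qbc \<longrightarrow> (\<not> qac) \<longrightarrow> (\<not> qab)) \<and> (qbc \<longrightarrow> qcd \<longrightarrow> qbd) \<and> (qbc \<longrightarrow> qce \<longrightarrow> qbe)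 \<and> (qbd \<longrightarrow> (\<not> qad) \<longrightarrow> (\<not> qab)) \<and> (qbd \<longrightarrow> (\<not> qcd) \<longrightarrow> qbc) \<and> (qbd \<longrightarrow> qde \<longrightarrow> qbe) \<and> (qbe \<longrightarrow> (\<not> qae) \<longrightarrow> (\<not> qab)) \<and> (qbe \<longrightarrow> (\<not> qce) \<longrightarrow> qbc) \<and> (qbe \<longrightarrow> (\<not> qde) \<longrightarrow> qbd) \<and> ((\<not> qac) \<longrightarrow> qab \<longrightarrow> (\<not> qbc)) \<and> ((\<not> qac) \<longrightarrow> qad \<longrightarrow> qcd) \<and> ((\<not> qac) \<longrightarrow> qae \<longrightarrow> qce) \<and> ((\<not> qbc) \<longrightarrow> (\<not> qab) \<longrightarrow> (\<not> qac)) \<and> ((\<not> qbc) \<longrightarrow> qbd \<longrightarrow> qcd) \<and> ((\<not> qbc) \<longrightarrow> qbe \<longrightarrow> qce) \<and> (qcd \<longrightarrow> (\<not> qad) \<longrightarrow> (\<not> qac)) \<and> (qcd \<longrightarrow> (\<not> qbd) \<longrightarrow> (\<not> qbc)) \<and> (qcd \<longrightarrow> qde \<longrightarrow> qce) \<and> (qce \<longrightarrow> (\<not> qae) \<longrightarrow> (\<not> qac)) \<and> (qce \<longrightarrow> (\<not> qbe) \<longrightarrow> (\<not> qbc)) \<and> (qce \<longrightarrow> (\<not> qde) \<longrightarrow> qcd) \<and> ((\<not> qad) \<longrightarrow> qab \<longrightarrow> (\<not> qbd)) \<and> ((\<not> qad) \<longrightarrow> qac \<longrightarrow> (\<not> qcd))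 \<and> ((\<not> qad) \<longrightarrow> qae \<longrightarrow> qde) \<and> ((\<not> qbd) \<longrightarrow> (\<not> qab) \<longrightarrow> (\<not> qad)) \<and> ((\<not> qbd) \<longrightarrow> qbc \<longrightarrow> (\<not> qcd)) \<and> ((\<not> qbd) \<longrightarrow> qbe \<longrightarrow> qde) \<and> ((\<not> qcd) \<longrightarrow> (\<not> qac) \<longrightarrow> (\<not> qad)) \<and> ((\<not> qcd) \<longrightarrow> (\<not> qbc) \<longrightarrow> (\<not> qbd)) \<and> ((\<not> qcd) \<longrightarrow> qce \<longrightarrow> qde) \<and> (qde \<longrightarrow> (\<not> qae) \<longrightarrow> (\<not> qad)) \<and> (qde \<longrightarrow> (\<not> qbe) \<longrightarrow> (\<not> qbd)) \<and> (qde \<longrightarrow> (\<not> qce) \<longrightarrow> (\<not> qcd)) \<and> ((\<not> qae) \<longrightarrow> qab \<longrightarrow> (\<not> qbe)) \<and> ((\<not> qae) \<longrightarrow> qac \<longrightarrow> (\<not> qce)) \<and> ((\<not> qae) \<longrightarrow> qad \<longrightarrow> (\<not> qde)) \<and> ((\<not> qbe) \<longrightarrow> (\<not> qab) \<longrightarrow> (\<not> qae)) \<and> ((\<not> qbe) \<longrightarrow> qbc \<longrightarrow> (\<not> qce)) \<and> ((\<not> qbe) \<longrightarrow> qbd \<longrightarrow> (\<not> qde)) \<and> ((\<not> qce) \<longrightarrow> (\<not> qac) \<longrightarrow> (\<not> qae)) \<and> ((\<not> qce) \<longrightarrow> (\<not> qbc) \<longrightarrow> (\<not> qbe)) \<and>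 ((\<not> qce) \<longrightarrow> qcd \<longrightarrow> (\<not> qde)) \<and> ((\<not> qde) \<longrightarrow> (\<not> qad) \<longrightarrow> (\<not> qae)) \<and> ((\<not> qde) \<longrightarrow> (\<not> qbd) \<longrightarrow> (\<not> qbe)) \<and> ((\<not> qde) \<longrightarrow> (\<not> qcd) \<longrightarrow> (\<not> qce))) \<longrightarrow> 2 \<le> (min (of_bool qad + of_bool qbd + of_bool qcd) (of_bool (\<not> qad) + of_bool (\<not> qbd) + of_bool (\<not> qcd)) + min (of_bool qae + of_bool qbe + of_bool qce) (of_bool (\<not> qae) + of_bool (\<not> qbe) + of_bool (\<not> qce)) + min (of_bool (\<not> qab) + of_bool (\<not> qad) + of_bool (\<not> qae)) (of_bool qab + of_bool qad + of_bool qae) + min (of_bool qbc + of_bool (\<not> qcd) + of_bool (\<not> qce)) (of_bool (\<not> qbc) + of_bool qcd + of_bool qce) + min (of_bool qab + of_bool (\<not> qbc) + of_bool (\<not> qbd) + of_bool (\<not> qbe)) (of_bool (\<not> qab) + of_bool qbc + of_bool qbd + of_bool qbe) :: nat)"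
  by (cases qab; cases qac; cases qad; cases qae; cases qbc; cases qbd; cases qbe; cases qcd; cases qce; cases qde; simp)


lemma MS_abs:
  assumes "(qab \<longrightarrow> qbc \<longrightarrow> qac)"
    and "(qab \<longrightarrow> qbd \<longrightarrow> qad)"
    and "(qab \<longrightarrow> qbe \<longrightarrow> qae)"
    and "(qac \<longrightarrow> (\<not> qbc) \<longrightarrow> qab)"
    and "(qac \<longrightarrow> qcd \<longrightarrow> qad)"
    and "(qac \<longrightarrow> qce \<longrightarrow> qae)"
    and "(qad \<longrightarrow> (\<not> qbd) \<longrightarrow> qab)"
    and "(qad \<longrightarrow> (\<not> qcd) \<longrightarrow> qac)"
    and "(qad \<longrightarrow> qde \<longrightarrow> qae)"
    and "(qae \<longrightarrow> (\<not> qbe) \<longrightarrow> qab)"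
    and "(qae \<longrightarrow> (\<not> qce) \<longrightarrow> qac)"
    and "(qae \<longrightarrow> (\<not> qde) \<longrightarrow> qad)"
    and "((\<not> qab) \<longrightarrow> qac \<longrightarrow> qbc)"
    and "((\<not> qab) \<longrightarrow> qad \<longrightarrow> qbd)"
    and "((\<not> qab) \<longrightarrow> qae \<longrightarrow> qbe)"
    and "(qbc \<longrightarrow> (\<not> qac) \<longrightarrow> (\<not> qab))"
    and "(qbc \<longrightarrow> qcd \<longrightarrow> qbd)"
    and "(qbc \<longrightarrow> qce \<longrightarrow> qbe)"
    and "(qbd \<longrightarrow> (\<not> qad) \<longrightarrow> (\<not> qab))"
    and "(qbd \<longrightarrow> (\<not> qcd) \<longrightarrow> qbc)"
    and "(qbd \<longrightarrow> qde \<longrightarrow> qbe)"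
    and "(qbe \<longrightarrow> (\<not> qae) \<longrightarrow> (\<not> qab))"
    and "(qbe \<longrightarrow> (\<not> qce) \<longrightarrow> qbc)"
    and "(qbe \<longrightarrow> (\<not> qde) \<longrightarrow> qbd)"
    and "((\<not> qac) \<longrightarrow> qab \<longrightarrow> (\<not> qbc))"
    and "((\<not> qac) \<longrightarrow> qad \<longrightarrow> qcd)"
    and "((\<not> qac) \<longrightarrow> qae \<longrightarrow> qce)"
    and "((\<not> qbc) \<longrightarrow> (\<not> qab) \<longrightarrow> (\<not> qac))"
    and "((\<not> qbc) \<longrightarrow> qbd \<longrightarrow> qcd)"
    and "((\<not> qbc) \<longrightarrow> qbe \<longrightarrow> qce)"
    and "(qcd \<longrightarrow> (\<not> qad) \<longrightarrow> (\<not> qac))"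
    and "(qcd \<longrightarrow> (\<not> qbd) \<longrightarrow> (\<not> qbc))"
    and "(qcd \<longrightarrow> qde \<longrightarrow> qce)"
    and "(qce \<longrightarrow> (\<not> qae) \<longrightarrow> (\<not> qac))"
    and "(qce \<longrightarrow> (\<not> qbe) \<longrightarrow> (\<not> qbc))"
    and "(qce \<longrightarrow> (\<not> qde) \<longrightarrow> qcd)"
    and "((\<not> qad) \<longrightarrow> qab \<longrightarrow> (\<not> qbd))"
    and "((\<not> qad) \<longrightarrow> qac \<longrightarrow> (\<not> qcd))"
    and "((\<not> qad) \<longrightarrow> qae \<longrightarrow> qde)"
    and "((\<not> qbd) \<longrightarrow> (\<not> qab) \<longrightarrow> (\<not> qad))"
    and "((\<not> qbd) \<longrightarrow> qbc \<longrightarrow> (\<not> qcd))"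
    and "((\<not> qbd) \<longrightarrow> qbe \<longrightarrow> qde)"
    and "((\<not> qcd) \<longrightarrow> (\<not> qac) \<longrightarrow> (\<not> qad))"
    and "((\<not> qcd) \<longrightarrow> (\<not> qbc) \<longrightarrow> (\<not> qbd))"
    and "((\<not> qcd) \<longrightarrow> qce \<longrightarrow> qde)"
    and "(qde \<longrightarrow> (\<not> qae) \<longrightarrow> (\<not> qad))"
    and "(qde \<longrightarrow> (\<not> qbe) \<longrightarrow> (\<not> qbd))"
    and "(qde \<longrightarrow> (\<not> qce) \<longrightarrow> (\<not> qcd))"
    and "((\<not> qae) \<longrightarrow> qab \<longrightarrow> (\<not> qbe))"
    and "((\<not> qae) \<longrightarrow> qac \<longrightarrow> (\<not> qce))"
    and "((\<not> qae) \<longrightarrow> qad \<longrightarrow> (\<not> qde))"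
    and "((\<not> qbe) \<longrightarrow> (\<not> qab) \<longrightarrow> (\<not> qae))"
    and "((\<not> qbe) \<longrightarrow> qbc \<longrightarrow> (\<not> qce))"
    and "((\<not> qbe) \<longrightarrow> qbd \<longrightarrow> (\<not> qde))"
    and "((\<not> qce) \<longrightarrow> (\<not> qac) \<longrightarrow> (\<not> qae))"
    and "((\<not> qce) \<longrightarrow> (\<not> qbc) \<longrightarrow> (\<not> qbe))"
    and "((\<not> qce) \<longrightarrow> qcd \<longrightarrow> (\<not> qde))"
    and "((\<not> qde) \<longrightarrow> (\<not> qad) \<longrightarrow> (\<not> qae))"
    and "((\<not> qde) \<longrightarrow> (\<not> qbd) \<longrightarrow> (\<not> qbe))"
    and "((\<not> qde) \<longrightarrow> (\<not> qcd) \<longrightarrow> (\<not> qce))"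
  shows "2 \<le> (min (of_bool qad + of_bool qbd + of_bool qcd) (of_bool (\<not> qad) + of_bool (\<not> qbd) + of_bool (\<not> qcd)) + min (of_bool qae + of_bool qbe + of_bool qce) (of_bool (\<not> qae) + of_bool (\<not> qbe) + of_bool (\<not> qce)) + min (of_bool (\<not> qab) + of_bool (\<not> qad) + of_bool (\<not> qae)) (of_bool qab + of_bool qad + of_bool qae) + min (of_bool qbc + of_bool (\<not> qcd) + of_bool (\<not> qce)) (of_bool (\<not> qbc) + of_bool qcd + of_bool qce) + min (of_bool qab + of_bool (\<not> qbc) + of_bool (\<not> qbd) + of_bool (\<not> qbe)) (of_bool (\<not> qab) + of_bool qbc + of_bool qbd + of_bool qbe) :: nat)"
  by (rule MS_abs_closed[THEN mp], intro conjI, (rule assms)+)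

lemma MS_lb:
  assumes "lt \<in> axes C5"
  shows "2 \<le> total_cost cost_MS C5 [{0,1,2},{1,3,4},{0,2,3,4}] lt"
proof -
  have ax: "is_axis C5 lt" using assms by (simp add: axes_def)
  note F = axis_facts2[OF ax]
  have asy: "\<And>x y. x \<in> C5 \<Longrightarrow> y \<in> C5 \<Longrightarrow> x \<noteq> y \<Longrightarrow> (y,x) \<in> lt \<longleftrightarrow> (x,y) \<notin> lt"
    using F(2,3,4) by blast
  have A0: "(1,0) \<in> lt \<longleftrightarrow> (0,1) \<notin> lt" by (rule asy) simp_all
  have A1: "(2,0) \<in> lt \<longleftrightarrow> (0,2) \<notin> lt" by (rule asy) simp_all
  have A2: "(3,0) \<in> lt \<longleftrightarrow> (0,3) \<notin> lt" by (rule asy) simp_all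
  have A3: "(4,0) \<in> lt \<longleftrightarrow> (0,4) \<notin> lt" by (rule asy) simp_all
  have A4: "(2,1) \<in> lt \<longleftrightarrow> (1,2) \<notin> lt" by (rule asy) simp_all
  have A5: "(3,1) \<in> lt \<longleftrightarrow> (1,3) \<notin> lt" by (rule asy) simp_all
  have A6: "(4,1) \<in> lt \<longleftrightarrow> (1,4) \<notin> lt" by (rule asy) simp_all
  have A7: "(3,2) \<in> lt \<longleftrightarrow> (2,3) \<notin> lt" by (rule asy) simp_all
  have A8: "(4,2) \<in> lt \<longleftrightarrow> (2,4) \<notin> lt" by (rule asy) simp_all
  have A9: "(4,3) \<in> lt \<longleftrightarrow> (3,4) \<notin> lt" by (rule asy) simp_all
  note A = A0 A1 A2 A3 A4 A5 A6 A7 A8 A9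
  have T:
    "(0,1) \<in> lt \<longrightarrow> (1,2) \<in> lt \<longrightarrow> (0,2) \<in> lt"
    "(0,1) \<in> lt \<longrightarrow> (1,3) \<in> lt \<longrightarrow> (0,3) \<in> lt"
    "(0,1) \<in> lt \<longrightarrow> (1,4) \<in> lt \<longrightarrow> (0,4) \<in> lt"
    "(0,2) \<in> lt \<longrightarrow> (2,1) \<in> lt \<longrightarrow> (0,1) \<in> lt"
    "(0,2) \<in> lt \<longrightarrow> (2,3) \<in> lt \<longrightarrow> (0,3) \<in> lt"
    "(0,2) \<in> lt \<longrightarrow> (2,4) \<in> lt \<longrightarrow> (0,4) \<in> lt"
    "(0,3) \<in> lt \<longrightarrow> (3,1) \<in> lt \<longrightarrow> (0,1) \<in> lt"
    "(0,3) \<in> lt \<longrightarrow> (3,2) \<in> lt \<longrightarrow> (0,2) \<in> lt"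
    "(0,3) \<in> lt \<longrightarrow> (3,4) \<in> lt \<longrightarrow> (0,4) \<in> lt"
    "(0,4) \<in> lt \<longrightarrow> (4,1) \<in> lt \<longrightarrow> (0,1) \<in> lt"
    "(0,4) \<in> lt \<longrightarrow> (4,2) \<in> lt \<longrightarrow> (0,2) \<in> lt"
    "(0,4) \<in> lt \<longrightarrow> (4,3) \<in> lt \<longrightarrow> (0,3) \<in> lt"
    "(1,0) \<in> lt \<longrightarrow> (0,2) \<in> lt \<longrightarrow> (1,2) \<in> lt"
    "(1,0) \<in> lt \<longrightarrow> (0,3) \<in> lt \<longrightarrow> (1,3) \<in> lt"
    "(1,0) \<in> lt \<longrightarrow> (0,4) \<in> lt \<longrightarrow> (1,4) \<in> lt"
    "(1,2) \<in> lt \<longrightarrow> (2,0) \<in> lt \<longrightarrow> (1,0) \<in> lt"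
    "(1,2) \<in> lt \<longrightarrow> (2,3) \<in> lt \<longrightarrow> (1,3) \<in> lt"
    "(1,2) \<in> lt \<longrightarrow> (2,4) \<in> lt \<longrightarrow> (1,4) \<in> lt"
    "(1,3) \<in> lt \<longrightarrow> (3,0) \<in> lt \<longrightarrow> (1,0) \<in> lt"
    "(1,3) \<in> lt \<longrightarrow> (3,2) \<in> lt \<longrightarrow> (1,2) \<in> lt"
    "(1,3) \<in> lt \<longrightarrow> (3,4) \<in> lt \<longrightarrow> (1,4) \<in> lt"
    "(1,4) \<in> lt \<longrightarrow> (4,0) \<in> lt \<longrightarrow> (1,0) \<in> lt"
    "(1,4) \<in> lt \<longrightarrow> (4,2) \<in> lt \<longrightarrow> (1,2) \<in> lt"
    "(1,4) \<in> lt \<longrightarrow> (4,3) \<in> lt \<longrightarrow> (1,3) \<in> lt"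
    "(2,0) \<in> lt \<longrightarrow> (0,1) \<in> lt \<longrightarrow> (2,1) \<in> lt"
    "(2,0) \<in> lt \<longrightarrow> (0,3) \<in> lt \<longrightarrow> (2,3) \<in> lt"
    "(2,0) \<in> lt \<longrightarrow> (0,4) \<in> lt \<longrightarrow> (2,4) \<in> lt"
    "(2,1) \<in> lt \<longrightarrow> (1,0) \<in> lt \<longrightarrow> (2,0) \<in> lt"
    "(2,1) \<in> lt \<longrightarrow> (1,3) \<in> lt \<longrightarrow> (2,3) \<in> lt"
    "(2,1) \<in> lt \<longrightarrow> (1,4) \<in> lt \<longrightarrow> (2,4) \<in> lt"
    "(2,3) \<in> lt \<longrightarrow> (3,0) \<in> lt \<longrightarrow> (2,0) \<in> lt"
    "(2,3) \<in> lt \<longrightarrow> (3,1) \<in> lt \<longrightarrow> (2,1) \<in> lt"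
    "(2,3) \<in> lt \<longrightarrow> (3,4) \<in> lt \<longrightarrow> (2,4) \<in> lt"
    "(2,4) \<in> lt \<longrightarrow> (4,0) \<in> lt \<longrightarrow> (2,0) \<in> lt"
    "(2,4) \<in> lt \<longrightarrow> (4,1) \<in> lt \<longrightarrow> (2,1) \<in> lt"
    "(2,4) \<in> lt \<longrightarrow> (4,3) \<in> lt \<longrightarrow> (2,3) \<in> lt"
    "(3,0) \<in> lt \<longrightarrow> (0,1) \<in> lt \<longrightarrow> (3,1) \<in> lt"
    "(3,0) \<in> lt \<longrightarrow> (0,2) \<in> lt \<longrightarrow> (3,2) \<in> lt"
    "(3,0) \<in> lt \<longrightarrow> (0,4) \<in> lt \<longrightarrow> (3,4) \<in> lt"
    "(3,1) \<in> lt \<longrightarrow> (1,0) \<in> lt \<longrightarrow> (3,0) \<in> lt"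
    "(3,1) \<in> lt \<longrightarrow> (1,2) \<in> lt \<longrightarrow> (3,2) \<in> lt"
    "(3,1) \<in> lt \<longrightarrow> (1,4) \<in> lt \<longrightarrow> (3,4) \<in> lt"
    "(3,2) \<in> lt \<longrightarrow> (2,0) \<in> lt \<longrightarrow> (3,0) \<in> lt"
    "(3,2) \<in> lt \<longrightarrow> (2,1) \<in> lt \<longrightarrow> (3,1) \<in> lt"
    "(3,2) \<in> lt \<longrightarrow> (2,4) \<in> lt \<longrightarrow> (3,4) \<in> lt"
    "(3,4) \<in> lt \<longrightarrow> (4,0) \<in> lt \<longrightarrow> (3,0) \<in> lt"
    "(3,4) \<in> lt \<longrightarrow> (4,1) \<in> lt \<longrightarrow> (3,1) \<in> lt"
    "(3,4) \<in> lt \<longrightarrow> (4,2) \<in> lt \<longrightarrow> (3,2) \<in> lt"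
    "(4,0) \<in> lt \<longrightarrow> (0,1) \<in> lt \<longrightarrow> (4,1) \<in> lt"
    "(4,0) \<in> lt \<longrightarrow> (0,2) \<in> lt \<longrightarrow> (4,2) \<in> lt"
    "(4,0) \<in> lt \<longrightarrow> (0,3) \<in> lt \<longrightarrow> (4,3) \<in> lt"
    "(4,1) \<in> lt \<longrightarrow> (1,0) \<in> lt \<longrightarrow> (4,0) \<in> lt"
    "(4,1) \<in> lt \<longrightarrow> (1,2) \<in> lt \<longrightarrow> (4,2) \<in> lt"
    "(4,1) \<in> lt \<longrightarrow> (1,3) \<in> lt \<longrightarrow> (4,3) \<in> lt"
    "(4,2) \<in> lt \<longrightarrow> (2,0) \<in> lt \<longrightarrow> (4,0) \<in> lt"
    "(4,2) \<in> lt \<longrightarrow> (2,1) \<in> lt \<longrightarrow> (4,1) \<in> lt"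
    "(4,2) \<in> lt \<longrightarrow> (2,3) \<in> lt \<longrightarrow> (4,3) \<in> lt"
    "(4,3) \<in> lt \<longrightarrow> (3,0) \<in> lt \<longrightarrow> (4,0) \<in> lt"
    "(4,3) \<in> lt \<longrightarrow> (3,1) \<in> lt \<longrightarrow> (4,1) \<in> lt"
    "(4,3) \<in> lt \<longrightarrow> (3,2) \<in> lt \<longrightarrow> (4,2) \<in> lt"
    using F(2) by blast+
  note T' = T[unfolded A]
  note H = MS_abs[where qab = "(0,1) \<in> lt" and qac = "(0,2) \<in> lt" and qad = "(0,3) \<in> lt" and qae = "(0,4) \<in> lt" and qbc = "(1,2) \<in> lt" and qbd = "(1,3) \<in> lt" and qbe = "(1,4) \<in> lt" and qcd = "(2,3) \<in> lt" and qce = "(2,4) \<in> lt" and qde = "(3,4) \<in> lt", OF T']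
  show ?thesis using H[unfolded add.assoc] unfolding MS_expand A add.assoc by assumption
qed

lemma lt2_mem: "(u,v) \<in> lt2 \<longleftrightarrow> u \<in> C5 \<and> v \<in> C5 \<and> u < v"
  by (simp add: lt2_def rk_axis_def)

lemma MS2: "total_cost cost_MS C5 [{0,1,2},{1,3,4},{0,2,3,4}] lt2 \<le> 2"
  unfolding MS_expand lt2_mem by simp

lemma LB1:
  assumes ax: "lt \<in> axes C5"
    and z: "\<And>B. B \<in> set [{1,3},{1,4},{0,2,3,4}] \<Longrightarrow> f C5 B lt = 0 \<Longrightarrow> is_interval B lt"
  shows "1 \<le> total_cost f C5 [{1,3},{1,4},{0,2,3,4}] lt"
proof (rule ccontr)
  assume "\<not> 1 \<le> total_cost f C5 [{1,3},{1,4},{0,2,3,4}] lt"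
  hence "f C5 {1,3} lt = 0" "f C5 {1,4} lt = 0" "f C5 {0,2,3,4} lt = 0"
    unfolding total_cost_def by simp_all
  hence "is_interval {1,3} lt \<and> is_interval {1,4} lt \<and> is_interval {0,2,3,4} lt" using z by simp
  moreover have "is_axis C5 lt" using ax by (simp add: axes_def)
  ultimately show False using no_all_int by force
qed

lemma not_cp:
  assumes "lt \<in> scoring_rule f C P" "finite C" "is_profile C P" "a \<in> C" "a' \<in> C" "clones P a a'"
    "(a,x) \<in> lt" "(x,a') \<in> lt" "A \<in> set P" "a \<in> A" "a' \<in> A" "x \<notin> A"
  shows "\<not> clone_proximity f"
  using assms unfolding clone_proximity_def by blast

lemma opt_of:
  assumes "lt \<in> axes C" "total_cost f C P lt \<le> k" "\<And>lt'. lt' \<in> axes C \<Longrightarrow> k \<le> total_cost f C P lt'"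
  shows "lt \<in> scoring_rule f C P"
  using assms unfolding scoring_rule_def by (auto intro: order.trans)

lemma P1_facts: "finite C5" "is_profile C5 [{1,3},{1,4},{0,2,3,4}]" "clones [{1,3},{1,4},{0,2,3,4::nat}] 0 2"
  by (auto simp: is_profile_def clones_def)
lemma P2_facts: "is_profile C5 [{0,1,2},{1,3,4},{0,2,3,4}]" "clones [{0,1,2},{1,3,4},{0,2,3,4::nat}] 0 2"
  by (auto simp: is_profile_def clones_def)

lemma VD_not: "\<not> clone_proximity (cost_VD :: nat set \<Rightarrow> nat set \<Rightarrow> (nat \<times> nat) set \<Rightarrow> nat)"
proof (rule not_cp[where x="1::nat" and A="{0,2,3,4}" and lt=lt1 and C=C5 and P="[{1,3},{1,4},{0,2,3,4}]" and a=0 and a'=2])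
  show "lt1 \<in> scoring_rule cost_VD C5 [{1,3},{1,4},{0,2,3,4}]"
    by (rule opt_of[OF lt1_ax VD1 LB1]) (auto intro: VD_zero)
qed (use P1_facts in \<open>auto simp: lt1_mem\<close>)

lemma BC_not: "\<not> clone_proximity (cost_BC :: nat set \<Rightarrow> nat set \<Rightarrow> (nat \<times> nat) set \<Rightarrow> nat)"
proof (rule not_cp[where x="1::nat" and A="{0,2,3,4}" and lt=lt1 and C=C5 and P="[{1,3},{1,4},{0,2,3,4}]" and a=0 and a'=2])
  show "lt1 \<in> scoring_rule cost_BC C5 [{1,3},{1,4},{0,2,3,4}]"
    by (rule opt_of[OF lt1_ax BC1 LB1]) (auto intro: BC_zero simp: axes_def)
qed (use P1_facts in \<open>auto simp: lt1_mem\<close>)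

lemma MF_not: "\<not> clone_proximity (cost_MF :: nat set \<Rightarrow> nat set \<Rightarrow> (nat \<times> nat) set \<Rightarrow> nat)"
proof (rule not_cp[where x="1::nat" and A="{0,2,3,4}" and lt=lt1 and C=C5 and P="[{1,3},{1,4},{0,2,3,4}]" and a=0 and a'=2])
  show "lt1 \<in> scoring_rule cost_MF C5 [{1,3},{1,4},{0,2,3,4}]"
    by (rule opt_of[OF lt1_ax MF1 LB1]) (auto intro: MF_zero simp: axes_def)
qed (use P1_facts in \<open>auto simp: lt1_mem\<close>)

lemma MS_not: "\<not> clone_proximity (cost_MS :: nat set \<Rightarrow> nat set \<Rightarrow> (nat \<times> nat) set \<Rightarrow> nat)"
proof (rule not_cp[where x="1::nat" and A="{0,2,3,4}" and lt=lt2 and C=C5 and P="[{0,1,2},{1,3,4},{0,2,3,4}]" and a=0 and a'=2])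
  show "lt2 \<in> scoring_rule cost_MS C5 [{0,1,2},{1,3,4},{0,2,3,4}]"
    by (rule opt_of[OF lt2_ax MS2 MS_lb])
qed (use P1_facts P2_facts in \<open>auto simp: lt2_mem\<close>)


theorem mainTheorem9:
  shows "clone_proximity (cost_FT :: 'a set \<Rightarrow> 'a set \<Rightarrow> ('a \<times> 'a) set \<Rightarrow> nat)
    \<and> \<not> clone_proximity (cost_VD :: nat set \<Rightarrow> nat set \<Rightarrow> (nat \<times> nat) set \<Rightarrow> nat)
    \<and> \<not> clone_proximity (cost_MF :: nat set \<Rightarrow> nat set \<Rightarrow> (nat \<times> nat) set \<Rightarrow> nat)
    \<and> \<not> clone_proximity (cost_BC :: nat set \<Rightarrow> nat set \<Rightarrow> (nat \<times> nat) set \<Rightarrow> nat)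
    \<and> \<not> clone_proximity (cost_MS :: nat set \<Rightarrow> nat set \<Rightarrow> (nat \<times> nat) set \<Rightarrow> nat)"
  using FT_clone_proximity VD_not MF_not BC_not MS_not by blast

end
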